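(* Let $Q$ be any golden rectangle inscribed in the unit circle (i.e. with all four vertices on $\partial\mathbb{D}$). Then there is at least one ellipse $E$ inscribed in $Q$ such that $E$ is the Poncelet curve of a finite Blaschke product $B$ of degree $4$ with $B(0)=0$.
   Context: $\mathbb{D}$ is the open unit disc, $\partial\mathbb{D}$ the unit circle, and $\alpha=\frac{1+\sqrt5}{2}$. A golden rectangle is a rectangle whose longer side length divided by its shorter side length equals $\alpha$. A finite Blaschke product of degree $n$ is $B(z)=\beta\prod_{i=1}^n\frac{z-a_i}{1-\overline{a_i}z}$ with $|\beta|=1$, $|a_i|<1$. For such $B$ with $B(0)=0$ and each $\lambda\in\partial\mathbb{D}$, there are $n$ distinct points $z_1,\dots,z_n\in\partial\mathbb{D}$ with $B(z_j)=\lambda$; the Poncelet curve associated with $B$ is the (unique) curve in $\mathbb{D}$ which, for every $\lambda\in\partial\mathbb{D}$, is inscribed in (tangent to every side of) the polygon whose vertices are these $n$ points taken in order of argument, i.e. the envelope of the lines joining consecutive points of $B^{-1}(\lambda)$. *)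

theory Defs
  imports "HOL-Analysis.Analysis"
begin

definition golden_ratio :: real where
  "golden_ratio = (1 + sqrt 5) / 2"

definition blaschke_product :: "nat \<Rightarrow> (complex \<Rightarrow> complex) \<Rightarrow> bool" where
  "blaschke_product n B \<longleftrightarrow>
     (\<exists>\<beta> (a :: nat \<Rightarrow> complex). cmod \<beta> = 1 \<and> (\<forall>i<n. cmod (a i) < 1) \<and>
        B = (\<lambda>z. \<beta> * (\<Prod>i<n. (z - a i) / (1 - cnj (a i) * z))))"

definition is_ellipse :: "complex set \<Rightarrow> bool" where
  "is_ellipse E \<longleftrightarrow>
     (\<exists>f1 f2 r. dist f1 f2 < 2 * r \<and> E = {z. dist z f1 + dist z f2 = 2 * r})"

definition is_rectangle :: "complex \<Rightarrow> complex \<Rightarrow> complex \<Rightarrow> complex \<Rightarrow> bool" where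
  "is_rectangle a b c d \<longleftrightarrow>
     a \<noteq> b \<and> b \<noteq> c \<and> b - a = c - d \<and> Re ((b - a) * cnj (c - b)) = 0"

definition golden_rectangle :: "complex \<Rightarrow> complex \<Rightarrow> complex \<Rightarrow> complex \<Rightarrow> bool" where
  "golden_rectangle a b c d \<longleftrightarrow> is_rectangle a b c d \<and>
     max (cmod (b - a)) (cmod (c - b)) / min (cmod (b - a)) (cmod (c - b)) = golden_ratio"

text \<open>A curve E inscribed in a convex polygon: contained in the polygon (convex hull of
  its vertices) and touching every side (for a convex curve inside the polygon this is
  tangency).\<close>
definition inscribed_in_polygon :: "complex set \<Rightarrow> complex set \<Rightarrow> (complex \<times> complex) set \<Rightarrow> bool" where
  "inscribed_in_polygon E V sides \<longleftrightarrow>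
     E \<subseteq> convex hull V \<and> (\<forall>(p, q) \<in> sides. E \<inter> closed_segment p q \<noteq> {})"

definition consecutive_on_circle :: "complex set \<Rightarrow> complex \<Rightarrow> complex \<Rightarrow> bool" where
  "consecutive_on_circle S z w \<longleftrightarrow> z \<in> S \<and> w \<in> S \<and> z \<noteq> w \<and>
     (\<exists>t. 0 < t \<and> t < 2 * pi \<and> w = z * cis t \<and>
        (\<forall>u. 0 < u \<and> u < t \<longrightarrow> z * cis u \<notin> S))"

definition poncelet_curve :: "(complex \<Rightarrow> complex) \<Rightarrow> complex set \<Rightarrow> bool" where
  "poncelet_curve B E \<longleftrightarrow>
     (\<forall>l. cmod l = 1 \<longrightarrow>
        (let S = {z. cmod z = 1 \<and> B z = l} in
         inscribed_in_polygon E S {(z, w). consecutive_on_circle S z w}))"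

end

theory Submission
  imports Defs
begin

lemma polyT: "\<lbrakk>x1^2+y1^2 = 1; x2^2+y2^2=1; (u^2-v^2)*(x1*x2-y1*y2) + 2*u * v * (x1*y2+x2*y1) = x1*x2+y1*y2\<rbrakk> \<Longrightarrow>
   2*(1 - u^2 - v^2) * ((x1+x2)^2+(y1+y2)^2) + 4*(u*(x1+x2) + v * (y1+y2))^2 = ((x1+x2)^2+(y1+y2)^2)^2" for x1 x2 y1 y2 u v :: real
  by algebra

lemma tang:
  fixes s1 s2 r :: complex
  assumes "cmod s1 = 1" "cmod s2 = 1" "Re (r^2 * cnj (s1 * s2)) = Re (s1 * cnj s2)"
    and "R\<^sup>2 = (1 + (cmod r)\<^sup>2)/2"
  shows "(R\<^sup>2 - r \<bullet> r) * (((s1+s2)/2) \<bullet> ((s1+s2)/2)) + (r \<bullet> ((s1+s2)/2))\<^sup>2 = (((s1+s2)/2) \<bullet> ((s1+s2)/2))\<^sup>2"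
proof -
  have h1: "Re s1 ^2 + Im s1^2 = 1" using assms(1) by (metis cmod_power2 one_power2)
  have h2: "Re s2 ^2 + Im s2^2 = 1" using assms(2) by (metis cmod_power2 one_power2)
  have h3: "(Re r^2 - Im r^2)*(Re s1 * Re s2 - Im s1 * Im s2) + 2*Re r*Im r*(Re s1 * Im s2 + Re s2 * Im s1) = Re s1 * Re s2 + Im s1 * Im s2"
    using assms(3) by (simp add: power2_eq_square algebra_simps)
  have R2: "R\<^sup>2 = (1 + Re r^2 + Im r^2)/2" using assms(4) by (simp add: cmod_power2)
  have P: "2*(1 - Re r^2 - Im r^2) * ((Re s1+Re s2)^2+(Im s1+Im s2)^2) + 4*(Re r*(Re s1+Re s2) + Im r*(Im s1+Im s2))^2 = ((Re s1+Re s2)^2+(Im s1+Im s2)^2)^2"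
    by (rule polyT[OF h1 h2 h3])
  show ?thesis unfolding inner_complex_def R2 using P
    by (simp add: power2_eq_square field_simps)
qed

lemma poly2: "\<lbrakk>b2 * nn + rn\<^sup>2 = nn\<^sup>2; R2 = b2 + rrr; nn > 0\<rbrakk> \<Longrightarrow>
  R2 * ((b2\<^sup>2 * nn + 2 * b2 * rn\<^sup>2 + rn\<^sup>2 * rrr) / nn\<^sup>2) - ((b2 * rn + rn * rrr) / nn)\<^sup>2 = R2 * b2"
  for b2 nn rn R2 rrr :: real
proof -
  assume a: "b2 * nn + rn\<^sup>2 = nn\<^sup>2" "R2 = b2 + rrr" "nn > 0"
  have "R2 * (b2\<^sup>2 * nn + 2 * b2 * rn\<^sup>2 + rn\<^sup>2 * rrr) - (b2 * rn + rn * rrr)\<^sup>2 = R2 * b2 * nn\<^sup>2"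
    using a(1,2) by algebra
  thus ?thesis using a(3) by (simp add: field_simps power2_eq_square)
qed

lemma ell_exists:
  fixes r n :: "'a::real_inner"
  assumes rr: "r \<bullet> r < R\<^sup>2" and T: "(R\<^sup>2 - r \<bullet> r) * (n \<bullet> n) + (r \<bullet> n)\<^sup>2 = (n \<bullet> n)\<^sup>2"
    and n0: "n \<noteq> 0"
  obtains z where "R\<^sup>2 * (z \<bullet> z) - (z \<bullet> r)\<^sup>2 = R\<^sup>2 * (R\<^sup>2 - r \<bullet> r)" "z \<bullet> n = n \<bullet> n"
proof -
  define b2 where "b2 = R\<^sup>2 - r \<bullet> r"
  define nn where "nn = n \<bullet> n"
  define rn where "rn = r \<bullet> n"
  define rrr where "rrr = r \<bullet> r"
  have nn: "nn > 0" using n0 by (simp add: nn_def)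
  define z where "z = (1/nn) *\<^sub>R (b2 *\<^sub>R n + rn *\<^sub>R r)"
  have zz: "z \<bullet> z = (b2\<^sup>2 * nn + 2 * b2 * rn\<^sup>2 + rn\<^sup>2 * rrr) / nn\<^sup>2"
    unfolding z_def nn_def rn_def rrr_def
    by (simp add: inner_add_left inner_add_right inner_commute power2_eq_square field_simps)
  have zr: "z \<bullet> r = (b2 * rn + rn * rrr) / nn"
    unfolding z_def nn_def rn_def rrr_def
    by (simp add: inner_add_left inner_add_right inner_commute add_divide_distrib)
  have zn: "z \<bullet> n = (b2 * nn + rn\<^sup>2) / nn"
    unfolding z_def nn_def rn_def rrr_def
    by (simp add: inner_add_left inner_add_right inner_commute power2_eq_square field_simps)
  have T': "b2 * nn + rn\<^sup>2 = nn\<^sup>2" using T by (simp add: b2_def nn_def rn_def)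
  show ?thesis
  proof (rule that)
    show "R\<^sup>2 * (z \<bullet> z) - (z \<bullet> r)\<^sup>2 = R\<^sup>2 * (R\<^sup>2 - r \<bullet> r)"
      unfolding zz zr b2_def[symmetric] by (rule poly2[OF T' _ nn]) (simp add: b2_def rrr_def)
    show "z \<bullet> n = n \<bullet> n" unfolding zn T' nn_def[symmetric] using nn by (simp add: power2_eq_square)
  qed
qed

lemma decomp_real: "\<lbrakk>e1*f1 + e2*f2 = 0; e1^2+e2^2 > 0; f1^2+f2^2>0; v1*e1+v2*e2 = 0; v1*f1+v2*f2=0\<rbrakk> \<Longrightarrow> v1 = 0 \<and> v2 = 0"
  for e1 e2 f1 f2 v1 v2 :: real
proof -
  assume a: "e1*f1 + e2*f2 = 0" "e1^2+e2^2 > 0" "f1^2+f2^2>0" "v1*e1+v2*e2 = 0" "v1*f1+v2*f2=0"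
  have d: "(e1*f2 - e2*f1)^2 = (e1^2+e2^2)*(f1^2+f2^2) - (e1*f1 + e2*f2)^2" by algebra
  hence dn: "e1*f2 - e2*f1 \<noteq> 0" using a(1,2,3) by auto
  have "(e1*f2 - e2*f1) * v1 = 0" using a(4,5) by algebra
  moreover have "(e1*f2 - e2*f1) * v2 = 0" using a(4,5) by algebra
  ultimately show ?thesis using dn by auto
qed

lemma decomp:
  fixes z e f :: complex
  assumes "e \<bullet> f = 0" "e \<noteq> 0" "f \<noteq> 0"
  shows "z = of_real ((z \<bullet> e) / (e \<bullet> e)) * e + of_real ((z \<bullet> f) / (f \<bullet> f)) * f"
proof -
  define v where "v = z - (((z \<bullet> e) / (e \<bullet> e)) *\<^sub>R e + ((z \<bullet> f) / (f \<bullet> f)) *\<^sub>R f)"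
  have ee: "e \<bullet> e > 0" "f \<bullet> f > 0" using assms by auto
  have fe: "f \<bullet> e = 0" using assms(1) by (simp add: inner_commute)
  have ve: "v \<bullet> e = 0" unfolding v_def using ee fe
    by (simp add: inner_diff_left inner_add_left)
  have vf: "v \<bullet> f = 0" unfolding v_def using ee assms(1)
    by (simp add: inner_diff_left inner_add_left)
  have "Re v = 0 \<and> Im v = 0"
    apply (rule decomp_real[of "Re e" "Re f" "Im e" "Im f"])
    using assms(1) ve vf ee by (auto simp: inner_complex_def cmod_power2[symmetric] power2_eq_square algebra_simps)
  hence "v = 0" by (simp add: complex_eq_iff)
  thus ?thesis unfolding v_def by (simp add: scaleR_conv_of_real)
qed

lemma hull_pt:
  fixes s1 s2 :: complex
  assumes "\<bar>\<alpha>\<bar> \<le> 1" "\<bar>\<beta>\<bar> \<le> 1"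
  shows "of_real \<alpha> * ((s1+s2)/2) + of_real \<beta> * ((s1-s2)/2) \<in> convex hull {s1,s2,-s1,-s2}"
proof -
  let ?H = "convex hull {s1,s2,-s1,-s2}"
  have cv: "convex ?H" by (rule convex_convex_hull)
  have v: "s1 \<in> ?H" "s2 \<in> ?H" "-s1 \<in> ?H" "-s2 \<in> ?H" by (auto intro: hull_inc)
  have b: "0 \<le> (1+\<beta>)/2" "0 \<le> (1-\<beta>)/2" "(1+\<beta>)/2 + (1-\<beta>)/2 = 1" using assms by (auto simp: field_simps)
  have a: "0 \<le> (1+\<alpha>)/2" "0 \<le> (1-\<alpha>)/2" "(1+\<alpha>)/2 + (1-\<alpha>)/2 = 1" using assms by (auto simp: field_simps)
  have P: "((1+\<beta>)/2) *\<^sub>R s1 + ((1-\<beta>)/2) *\<^sub>R s2 \<in> ?H" by (rule convexD[OF cv v(1,2) b])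
  have Q: "((1+\<beta>)/2) *\<^sub>R (-s2) + ((1-\<beta>)/2) *\<^sub>R (-s1) \<in> ?H" by (rule convexD[OF cv v(4,3) b])
  have "((1+\<alpha>)/2) *\<^sub>R (((1+\<beta>)/2) *\<^sub>R s1 + ((1-\<beta>)/2) *\<^sub>R s2) + ((1-\<alpha>)/2) *\<^sub>R (((1+\<beta>)/2) *\<^sub>R (-s2) + ((1-\<beta>)/2) *\<^sub>R (-s1)) \<in> ?H"
    by (rule convexD[OF cv P Q a])
  moreover have "((1+\<alpha>)/2) *\<^sub>R (((1+\<beta>)/2) *\<^sub>R s1 + ((1-\<beta>)/2) *\<^sub>R s2) + ((1-\<alpha>)/2) *\<^sub>R (((1+\<beta>)/2) *\<^sub>R (-s2) + ((1-\<beta>)/2) *\<^sub>R (-s1))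
     = of_real \<alpha> * ((s1+s2)/2) + of_real \<beta> * ((s1-s2)/2)"
    by (simp add: scaleR_conv_of_real field_simps) (simp add: algebra_simps)?
  ultimately show ?thesis by simp
qed

lemma seg_pt:
  fixes s1 s2 :: complex
  assumes "\<bar>\<beta>\<bar> \<le> 1"
  shows "(s1+s2)/2 + of_real \<beta> * ((s1-s2)/2) \<in> closed_segment s1 s2"
proof -
  have "(s1+s2)/2 + of_real \<beta> * ((s1-s2)/2) = (1 - (1-\<beta>)/2) *\<^sub>R s1 + ((1-\<beta>)/2) *\<^sub>R s2"
    by (simp add: scaleR_conv_of_real field_simps) (simp add: algebra_simps)?
  moreover have "0 \<le> (1-\<beta>)/2" "(1-\<beta>)/2 \<le> 1" using assms by auto
  ultimately show ?thesis unfolding closed_segment_def by blast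
qed

lemma ell_char:
  fixes z r :: "'a::real_inner"
  assumes "norm r < R"
  shows "dist z r + dist z (-r) = 2*R \<longleftrightarrow> R\<^sup>2 * (z \<bullet> z) - (z \<bullet> r)\<^sup>2 = R\<^sup>2 * (R\<^sup>2 - r \<bullet> r)"
proof -
  have R0: "R > 0" using assms norm_ge_zero[of r] by linarith
  have rr: "r \<bullet> r < R\<^sup>2" using assms by (metis norm_ge_zero power2_norm_eq_inner power_strict_mono zero_less_numeral)
  define p where "p = z \<bullet> r"
  define d1 where "d1 = norm (z - r)"
  define d2 where "d2 = norm (z + r)"
  have d1sq: "d1\<^sup>2 = z \<bullet> z - 2*p + r \<bullet> r" unfolding d1_def p_def power2_norm_eq_inner
    by (simp add: inner_diff_left inner_diff_right inner_commute)
  have d2sq: "d2\<^sup>2 = z \<bullet> z + 2*p + r \<bullet> r" unfolding d2_def p_def power2_norm_eq_inner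
    by (simp add: inner_add_left inner_add_right inner_commute)
  have dd: "dist z r + dist z (-r) = d1 + d2" by (simp add: d1_def d2_def dist_norm)
  have d1p: "d1 \<ge> 0" "d2 \<ge> 0" by (auto simp: d1_def d2_def)
  show ?thesis unfolding dd p_def[symmetric]
  proof
    assume h: "d1 + d2 = 2*R"
    have "d2\<^sup>2 - d1\<^sup>2 = 4*p" using d1sq d2sq by simp
    moreover have "(d2 - d1)*(d1+d2) = d2\<^sup>2 - d1\<^sup>2" by (simp add: power2_eq_square algebra_simps)
    ultimately have "(d2 - d1) * (2*R) = 4*p" using h by simp
    hence "d2 - d1 = 2*p/R" using R0 by (simp add: field_simps)
    hence "d1 = R - p/R" using h by (simp add: field_simps)
    hence "(R - p/R)\<^sup>2 = z \<bullet> z - 2*p + r \<bullet> r" using d1sq by simp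
    thus "R\<^sup>2 * (z \<bullet> z) - p\<^sup>2 = R\<^sup>2 * (R\<^sup>2 - r \<bullet> r)" using R0
      by (simp add: field_simps power2_eq_square, (simp add: algebra_simps)?)
  next
    assume h: "R\<^sup>2 * (z \<bullet> z) - p\<^sup>2 = R\<^sup>2 * (R\<^sup>2 - r \<bullet> r)"
    have cs: "p\<^sup>2 \<le> (z \<bullet> z) * (r \<bullet> r)" unfolding p_def
      by (metis Cauchy_Schwarz_ineq)
    have "R\<^sup>2 * p\<^sup>2 \<le> R\<^sup>2 * ((z \<bullet> z) * (r \<bullet> r))" using cs by (simp add: mult_left_mono)
    also have "\<dots> = (R\<^sup>2 * (z \<bullet> z)) * (r \<bullet> r)" by (simp add: mult.assoc)
    also have "R\<^sup>2 * (z \<bullet> z) = p\<^sup>2 + R\<^sup>2 * (R\<^sup>2 - r \<bullet> r)" using h by linarith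
    finally have "p\<^sup>2 * (R\<^sup>2 - r \<bullet> r) \<le> R\<^sup>2 * (r \<bullet> r) * (R\<^sup>2 - r \<bullet> r)" by (simp add: algebra_simps)
    hence "p\<^sup>2 \<le> R\<^sup>2 * (r \<bullet> r)" using rr by simp
    also have "\<dots> < R\<^sup>2 * R\<^sup>2" using rr R0 by (intro mult_strict_left_mono) auto
    finally have "\<bar>p\<bar> < R\<^sup>2" by (metis abs_le_square_iff abs_of_nonneg dual_order.strict_trans1 le_less not_less power2_eq_square zero_le_power2 power_strict_mono[of "R^2" "\<bar>p\<bar>" 2] abs_ge_zero)
    hence pos1: "R - p/R > 0" and pos2: "R + p/R > 0" using R0 by (auto simp: field_simps power2_eq_square abs_less_iff)
    have hz: "z \<bullet> z + r \<bullet> r = R\<^sup>2 + p\<^sup>2/R\<^sup>2"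
    proof -
      have "R\<^sup>2 * (z \<bullet> z + r \<bullet> r) = R\<^sup>2 * (R\<^sup>2 + p\<^sup>2/R\<^sup>2)" using h R0 by (simp add: algebra_simps)
      thus ?thesis using R0 by simp
    qed
    have sq1: "(R - p/R)\<^sup>2 = R\<^sup>2 - 2*p + p\<^sup>2/R\<^sup>2" using R0 by (simp add: power2_diff power_divide)
    have sq2: "(R + p/R)\<^sup>2 = R\<^sup>2 + 2*p + p\<^sup>2/R\<^sup>2" using R0 by (simp add: power2_sum power_divide)
    have "d1\<^sup>2 = (R - p/R)\<^sup>2" using d1sq hz sq1 by linarith
    hence e1: "d1 = R - p/R" using pos1 d1p by (simp add: power2_eq_iff_nonneg)
    have "d2\<^sup>2 = (R + p/R)\<^sup>2" using d2sq hz sq2 by linarith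
    hence e2: "d2 = R + p/R" using pos2 d1p by (simp add: power2_eq_iff_nonneg)
    show "d1 + d2 = 2*R" using e1 e2 by simp
  qed
qed

lemma poly1: "\<lbrakk>R2 * zz - zr\<^sup>2 = R2 * b2; R2 = b2 + rrr\<rbrakk> \<Longrightarrow>
   R2 * (zz - 2*t*(b2*zn + rn*zr) + t\<^sup>2 * (b2\<^sup>2*nn + 2*b2*rn*rn + rn\<^sup>2*rrr)) - (zr - t * (b2 * rn + rn * rrr))\<^sup>2
   = R2 * b2 * (1 - 2*t*zn + t\<^sup>2 * (b2*nn + rn\<^sup>2))" for R2 zz zr b2 rrr t zn rn nn :: real
  by algebra

lemma ell_bound:
  fixes z r n :: "'a::real_inner"
  assumes rr: "r \<bullet> r < R\<^sup>2" and h: "R\<^sup>2 * (z \<bullet> z) - (z \<bullet> r)\<^sup>2 = R\<^sup>2 * (R\<^sup>2 - r \<bullet> r)"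
  shows "(z \<bullet> n)\<^sup>2 \<le> (R\<^sup>2 - r \<bullet> r) * (n \<bullet> n) + (r \<bullet> n)\<^sup>2"
proof -
  define b2 where "b2 = R\<^sup>2 - r \<bullet> r"
  have b2: "b2 > 0" using rr by (simp add: b2_def)
  define K where "K = b2 * (n \<bullet> n) + (r \<bullet> n)\<^sup>2"
  have Kn: "K \<ge> 0" using b2 by (simp add: K_def)
  show ?thesis
  proof (cases "K = 0")
    case True
    hence "n \<bullet> n = 0" using b2 by (simp add: K_def add_nonneg_eq_0_iff)
    hence "n = 0" by simp
    thus ?thesis by simp
  next
    case False
    hence Kp: "K > 0" using Kn by simp
    define t where "t = (z \<bullet> n) / K"
    define w where "w = b2 *\<^sub>R n + (r \<bullet> n) *\<^sub>R r"
    define x where "x = z - t *\<^sub>R w"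
    have R0: "R\<^sup>2 > 0" using rr inner_ge_zero[of r] by linarith
    have Mx: "R\<^sup>2 * (x \<bullet> x) - (x \<bullet> r)\<^sup>2 \<ge> 0"
    proof -
      have "(x \<bullet> r)\<^sup>2 \<le> (x \<bullet> x) * (r \<bullet> r)" by (metis Cauchy_Schwarz_ineq)
      also have "\<dots> \<le> (x \<bullet> x) * R\<^sup>2" using rr by (intro mult_left_mono) auto
      finally show ?thesis by (simp add: mult.commute)
    qed
    define zz where "zz = z \<bullet> z"
    define zn where "zn = z \<bullet> n"
    define zr where "zr = z \<bullet> r"
    define rn where "rn = r \<bullet> n"
    define nn where "nn = n \<bullet> n"
    define rrr where "rrr = r \<bullet> r"
    have xx: "x \<bullet> x = zz - 2*t*(b2*zn + rn*zr) + t\<^sup>2 * (b2\<^sup>2*nn + 2*b2*rn*rn + rn\<^sup>2*rrr)"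
      unfolding x_def w_def zz_def zn_def zr_def rn_def nn_def rrr_def
      by (simp add: inner_diff_left inner_diff_right inner_add_left inner_add_right inner_commute power2_eq_square algebra_simps)
    have xr: "x \<bullet> r = zr - t * (b2 * rn + rn * rrr)"
      unfolding x_def w_def zz_def zn_def zr_def rn_def nn_def rrr_def
      by (simp add: inner_diff_left inner_diff_right inner_add_left inner_add_right inner_commute algebra_simps)
    have hh: "R\<^sup>2 * zz - zr\<^sup>2 = R\<^sup>2 * b2" using h by (simp add: zz_def zr_def b2_def)
    have b2d: "R\<^sup>2 = b2 + rrr" by (simp add: b2_def rrr_def)
    have "R\<^sup>2 * (x \<bullet> x) - (x \<bullet> r)\<^sup>2 = R\<^sup>2 * b2 * (1 - 2*t*zn + t\<^sup>2 * K)"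
      unfolding xx xr K_def nn_def[symmetric] rn_def[symmetric] by (rule poly1[OF hh b2d])
    hence "1 - 2*t*zn + t\<^sup>2 * K \<ge> 0" using Mx R0 b2
      by (metis mult_pos_pos zero_le_mult_iff not_le less_le)
    moreover have "1 - 2*t*zn + t\<^sup>2 * K = 1 - zn\<^sup>2 / K" using Kp unfolding t_def zn_def
      by (simp add: field_simps power2_eq_square)
    ultimately have "zn\<^sup>2 / K \<le> 1" by simp
    hence "zn\<^sup>2 \<le> K" using Kp by (simp add: divide_le_eq)
    thus ?thesis by (simp add: zn_def K_def b2_def)
  qed
qed

lemma abs_le_of_sq: "x\<^sup>2 \<le> y\<^sup>2 \<Longrightarrow> (0::real) \<le> y \<Longrightarrow> \<bar>x\<bar> \<le> y"
  by (metis abs_le_square_iff abs_of_nonneg)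

lemma core:
  fixes s1 s2 r :: complex and R :: real
  assumes u1: "cmod s1 = 1" and u2: "cmod s2 = 1" and ne1: "s2 \<noteq> s1" and ne2: "s2 \<noteq> -s1"
   and ch: "Re (r^2 * cnj (s1 * s2)) = Re (s1 * cnj s2)" and r1: "cmod r < 1"
   and R: "R = sqrt ((1 + (cmod r)^2)/2)"
  shows "{z. dist z r + dist z (-r) = 2*R} \<subseteq> convex hull {s1,s2,-s1,-s2}"
    and "{z. dist z r + dist z (-r) = 2*R} \<inter> closed_segment s1 s2 \<noteq> {}"
proof -
  have R2: "R\<^sup>2 = (1 + (cmod r)^2)/2" unfolding R by (simp add: add_nonneg_nonneg)
  have rR: "cmod r < R" unfolding R
    by (rule real_less_rsqrt) (use r1 in \<open>simp add: power2_eq_square field_simps\<close>, 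
        smt (verit, best) mult_left_le_one_le norm_ge_zero)
  have rr: "r \<bullet> r < R\<^sup>2" using rR by (metis norm_ge_zero power2_norm_eq_inner power_strict_mono zero_less_numeral)
  define e where "e = (s1+s2)/2"
  define f where "f = (s1-s2)/2"
  have Te: "(R\<^sup>2 - r \<bullet> r) * (e \<bullet> e) + (r \<bullet> e)\<^sup>2 = (e \<bullet> e)\<^sup>2"
    unfolding e_def by (rule tang[OF u1 u2 ch R2])
  have Tf: "(R\<^sup>2 - r \<bullet> r) * (f \<bullet> f) + (r \<bullet> f)\<^sup>2 = (f \<bullet> f)\<^sup>2"
  proof -
    have "Re (r^2 * cnj (s1 * (-s2))) = Re (s1 * cnj (-s2))" using ch by simp
    from tang[OF u1 _ this R2] u2 show ?thesis by (simp add: f_def)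
  qed
  have e0: "e \<noteq> 0" using ne2 unfolding e_def by (auto simp: add_eq_0_iff)
  have f0: "f \<noteq> 0" using ne1 unfolding f_def by auto
  have s11: "s1 \<bullet> s1 = 1" "s2 \<bullet> s2 = 1" using u1 u2 by (metis power2_norm_eq_inner one_power2)+
  have c1: "Re s1 ^2 + Im s1^2 = 1" using u1 by (metis cmod_power2 one_power2)
  have c2: "Re s2 ^2 + Im s2^2 = 1" using u2 by (metis cmod_power2 one_power2)
  have ef: "e \<bullet> f = 0" unfolding e_def f_def inner_complex_def
  proof -
    have "(Re s1 + Re s2) * (Re s1 - Re s2) + (Im s1 + Im s2) * (Im s1 - Im s2) = 0"
      using c1 c2 by (simp add: power2_eq_square algebra_simps)
    thus "Re ((s1 + s2) / 2) * Re ((s1 - s2) / 2) + Im ((s1 + s2) / 2) * Im ((s1 - s2) / 2) = 0"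
      by (simp add: field_simps)
  qed
  have ee: "e \<bullet> e > 0" "f \<bullet> f > 0" using e0 f0 by auto
  have char: "\<And>z. dist z r + dist z (-r) = 2*R \<longleftrightarrow> R\<^sup>2 * (z \<bullet> z) - (z \<bullet> r)\<^sup>2 = R\<^sup>2 * (R\<^sup>2 - r \<bullet> r)"
    by (rule ell_char[OF rR])
  have bnd: "\<bar>z \<bullet> e\<bar> \<le> e \<bullet> e" "\<bar>z \<bullet> f\<bar> \<le> f \<bullet> f" if "dist z r + dist z (-r) = 2*R" for z
  proof -
    have q: "R\<^sup>2 * (z \<bullet> z) - (z \<bullet> r)\<^sup>2 = R\<^sup>2 * (R\<^sup>2 - r \<bullet> r)" using that char by blast
    show "\<bar>z \<bullet> e\<bar> \<le> e \<bullet> e" using ell_bound[OF rr q, of e] Te ee by (intro abs_le_of_sq) auto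
    show "\<bar>z \<bullet> f\<bar> \<le> f \<bullet> f" using ell_bound[OF rr q, of f] Tf ee by (intro abs_le_of_sq) auto
  qed
  have dec: "\<And>z. z = of_real ((z \<bullet> e) / (e \<bullet> e)) * e + of_real ((z \<bullet> f) / (f \<bullet> f)) * f"
    by (rule decomp[OF ef e0 f0])
  show "{z. dist z r + dist z (-r) = 2*R} \<subseteq> convex hull {s1,s2,-s1,-s2}"
  proof
    fix z assume "z \<in> {z. dist z r + dist z (-r) = 2*R}"
    hence b: "\<bar>z \<bullet> e\<bar> \<le> e \<bullet> e" "\<bar>z \<bullet> f\<bar> \<le> f \<bullet> f" using bnd by auto
    have "\<bar>(z \<bullet> e) / (e \<bullet> e)\<bar> \<le> 1" "\<bar>(z \<bullet> f) / (f \<bullet> f)\<bar> \<le> 1"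
      using b ee by (auto simp: abs_divide divide_le_eq_1)
    from hull_pt[OF this, of s1 s2] dec[of z] show "z \<in> convex hull {s1,s2,-s1,-s2}"
      by (simp add: e_def f_def)
  qed
  obtain z where zq: "R\<^sup>2 * (z \<bullet> z) - (z \<bullet> r)\<^sup>2 = R\<^sup>2 * (R\<^sup>2 - r \<bullet> r)" and ze: "z \<bullet> e = e \<bullet> e"
    using ell_exists[OF rr Te e0] by blast
  have zE: "dist z r + dist z (-r) = 2*R" using zq char by blast
  have "\<bar>(z \<bullet> f) / (f \<bullet> f)\<bar> \<le> 1" using bnd(2)[OF zE] ee by (auto simp: abs_divide divide_le_eq_1)
  from seg_pt[OF this, of s1 s2] dec[of z] ze ee have "z \<in> closed_segment s1 s2"
    by (simp add: e_def f_def)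
  with zE show "{z. dist z r + dist z (-r) = 2*R} \<inter> closed_segment s1 s2 \<noteq> {}" by blast
qed

lemma polyU: "(1 - (a*x + b*y))^2 + (b*x - a*y)^2 - ((x - a)^2 + (y - b)^2) = (1 - (x\<^sup>2 + y\<^sup>2)) * (1 - (a^2 + b^2))"
  for x y a b :: real
  by algebra

lemma unit_root:
  fixes q l w :: complex
  assumes q1: "cmod q < 1" and l1: "cmod l = 1" and h: "w * (w - q) = l * (1 - cnj q * w)"
  shows "cmod w = 1"
proof -
  have "cmod (w * (w - q)) = cmod (1 - cnj q * w)" using h l1 by (simp add: norm_mult)
  hence hn: "(cmod (w * (w - q)))\<^sup>2 = (cmod (1 - cnj q * w))\<^sup>2" by simp
  define X where "X = (cmod w)\<^sup>2"
  define Y where "Y = (cmod (w - q))\<^sup>2"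
  define Z where "Z = (cmod (1 - cnj q * w))\<^sup>2"
  define Q where "Q = (cmod q)\<^sup>2"
  have P1: "X * Y = Z" using hn unfolding X_def Y_def Z_def by (simp add: norm_mult power_mult_distrib)
  have P2: "Z - Y = (1 - X) * (1 - Q)"
    unfolding X_def Y_def Z_def Q_def cmod_power2 using polyU[of "Re q" "Re w" "Im q" "Im w"]
    by (simp add: algebra_simps)
  have P: "X * Y = Z \<and> Z - Y = (1 - X) * (1 - Q)" using P1 P2 by simp
  have Y0: "Y \<ge> 0" "X \<ge> 0" by (simp_all add: Y_def X_def)
  have Q1: "Q < 1" using q1 by (simp add: Q_def power_less_one_iff abs_less_iff)
  have "X = 1"
  proof (rule ccontr)
    assume "X \<noteq> 1"
    hence "X < 1 \<or> X > 1" by auto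
    thus False
    proof
      assume X: "X < 1"
      hence "Z - Y > 0" using P Q1 by (simp add: mult_pos_pos)
      moreover have "X * Y \<le> Y" using X Y0 by (simp add: mult_left_le_one_le mult.commute mult_le_cancel_right1)
      ultimately show False using P by linarith
    next
      assume X: "X > 1"
      hence "Z - Y < 0" using P Q1 by (simp add: mult_neg_pos)
      moreover have "X * Y \<ge> Y" using X Y0 by (simp add: mult_le_cancel_right1)
      ultimately show False using P by linarith
    qed
  qed
  thus ?thesis unfolding X_def using norm_ge_zero[of w] by (auto simp: power2_eq_1_iff)
qed

lemma quad_fac:
  fixes p l W :: complex
  shows "W\<^sup>2 - p * W - l = (W - (p + csqrt (p\<^sup>2 + 4*l))/2) * (W - (p - csqrt (p\<^sup>2 + 4*l))/2)"
proof -
  define sd where "sd = csqrt (p\<^sup>2 + 4*l)"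
  have sd: "sd\<^sup>2 = p\<^sup>2 + 4*l" by (simp add: sd_def)
  have "4 * (W\<^sup>2 - p * W - l) = (2*W - (p + sd)) * (2*W - (p - sd))" using sd by algebra
  hence "W\<^sup>2 - p * W - l = ((2*W - (p + sd))/2) * ((2*W - (p - sd))/2)" by (simp add: field_simps)
  also have "\<dots> = (W - (p + sd)/2) * (W - (p - sd)/2)" by (simp add: field_simps)
  finally show ?thesis by (simp add: sd_def)
qed

lemma chord_alg:
  fixes q Q s1 s2 c1 c2 :: complex
  assumes "s1 * c1 = 1" "s2 * c2 = 1" "q + s1\<^sup>2 * s2\<^sup>2 * Q = s1\<^sup>2 + s2\<^sup>2"
  shows "q * (c1 * c2) + Q * (s1 * s2) = s1 * c2 + s2 * c1"
  using assms by algebra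

lemma roots_set:
  fixes q l :: complex and Bz :: "complex \<Rightarrow> complex"
  assumes q1: "cmod q < 1" and l1: "cmod l = 1"
    and SB: "\<And>z. cmod z = 1 \<Longrightarrow> (Bz z = l \<longleftrightarrow> (z\<^sup>2)\<^sup>2 - (q - l * cnj q) * z\<^sup>2 - l = 0)"
  shows "\<exists>s1 s2. cmod s1 = 1 \<and> cmod s2 = 1 \<and> s2 \<noteq> s1 \<and> s2 \<noteq> -s1 \<and>
     Re (q * cnj (s1 * s2)) = Re (s1 * cnj s2) \<and> {z. cmod z = 1 \<and> Bz z = l} = {s1, s2, -s1, -s2}"
proof -
  define p where "p = q - l * cnj q"
  define sd where "sd = csqrt (p\<^sup>2 + 4*l)"
  define w1 where "w1 = (p + sd)/2"
  define w2 where "w2 = (p - sd)/2"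
  have fac: "\<And>W. W\<^sup>2 - p * W - l = (W - w1) * (W - w2)" unfolding w1_def w2_def sd_def by (rule quad_fac)
  have sd2: "sd\<^sup>2 = p\<^sup>2 + 4*l" by (simp add: sd_def)
  have sum: "w1 + w2 = p" by (simp add: w1_def w2_def field_simps)
  have prod: "w1 * w2 = -l"
  proof -
    have "4 * (w1 * w2) = p\<^sup>2 - sd\<^sup>2" unfolding w1_def w2_def by (simp add: field_simps power2_eq_square)
    thus ?thesis using sd2 by simp
  qed
  have wroot: "w * (w - q) = l * (1 - cnj q * w)" if "w = w1 \<or> w = w2" for w
  proof -
    have "w\<^sup>2 - p * w - l = 0" using fac[of w] that by auto
    thus ?thesis unfolding p_def by (simp add: power2_eq_square algebra_simps)
  qed
  have wu1: "cmod w1 = 1" using unit_root[OF q1 l1 wroot] by blast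
  have wu2: "cmod w2 = 1" using unit_root[OF q1 l1 wroot] by blast
  have wcnj: "w * cnj w = 1" if "cmod w = 1" for w
    using complex_norm_square[of w] that by simp
  have wne: "w1 \<noteq> w2"
  proof
    assume eq: "w1 = w2"
    hence "2 * w1 = p" using sum by simp
    have l': "l = - w1\<^sup>2" using prod eq by (simp add: power2_eq_square)
    have "2 * w1 = q + w1\<^sup>2 * cnj q" using \<open>2 * w1 = p\<close> l' unfolding p_def by simp
    hence "2 * w1 * cnj w1 = (q + w1\<^sup>2 * cnj q) * cnj w1" by simp
    hence "2 = q * cnj w1 + w1 * cnj q" using wcnj[OF wu1]
      unfolding power2_eq_square by algebra
    hence "2 = q * cnj w1 + cnj (q * cnj w1)" using wcnj[OF wu1] by (simp add: mult.commute)
    hence eqR: "Re 2 = Re (q * cnj w1 + cnj (q * cnj w1))" by (rule arg_cong)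
    have "Re (q * cnj w1) = 1" using eqR by simp
    moreover have "Re (q * cnj w1) \<le> cmod (q * cnj w1)" by (rule complex_Re_le_cmod)
    moreover have "cmod (q * cnj w1) = cmod q" using wu1 by (simp add: norm_mult)
    ultimately show False using q1 by simp
  qed
  define s1 where "s1 = csqrt w1"
  define s2 where "s2 = csqrt w2"
  have ss1: "s1\<^sup>2 = w1" "s2\<^sup>2 = w2" by (simp_all add: s1_def s2_def)
  have "(cmod s1)^2 = 1" "(cmod s2)^2 = 1" using wu1 wu2 ss1 by (simp_all add: norm_power[symmetric])
  hence su: "cmod s1 = 1" "cmod s2 = 1" using norm_ge_zero[of s1] norm_ge_zero[of s2]
    by (auto simp: power2_eq_1_iff)
  have sne: "s2 \<noteq> s1" "s2 \<noteq> -s1" using wne ss1 by auto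
  have chw: "q + s1\<^sup>2 * s2\<^sup>2 * cnj q = s1\<^sup>2 + s2\<^sup>2"
    unfolding ss1 using sum prod by (simp add: p_def mult.assoc)
  have ca: "q * (cnj s1 * cnj s2) + cnj q * (s1 * s2) = s1 * cnj s2 + s2 * cnj s1"
    by (rule chord_alg[OF wcnj[OF su(1)] wcnj[OF su(2)] chw])
  have ch: "Re (q * cnj (s1 * s2)) = Re (s1 * cnj s2)"
  proof -
    have "Re (q * (cnj s1 * cnj s2) + cnj q * (s1 * s2)) = 2 * Re (q * cnj (s1 * s2))" by (simp add: algebra_simps)
    moreover have "Re (s1 * cnj s2 + s2 * cnj s1) = 2 * Re (s1 * cnj s2)" by (simp add: algebra_simps)
    ultimately show ?thesis using ca by simp
  qed
  have S: "{z. cmod z = 1 \<and> Bz z = l} = {s1, s2, -s1, -s2}"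
  proof (rule set_eqI, rule iffI)
    fix z assume "z \<in> {z. cmod z = 1 \<and> Bz z = l}"
    hence z1: "cmod z = 1" and "Bz z = l" by auto
    hence "(z\<^sup>2 - w1) * (z\<^sup>2 - w2) = 0" using SB fac[of "z\<^sup>2"] by (simp add: p_def)
    hence "z\<^sup>2 = s1\<^sup>2 \<or> z\<^sup>2 = s2\<^sup>2" using ss1 by auto
    thus "z \<in> {s1, s2, -s1, -s2}" by (auto simp: power2_eq_iff)
  next
    fix z assume "z \<in> {s1, s2, -s1, -s2}"
    hence z1: "cmod z = 1" and "z\<^sup>2 = w1 \<or> z\<^sup>2 = w2" using su ss1 by auto
    hence "(z\<^sup>2)\<^sup>2 - (q - l * cnj q) * z\<^sup>2 - l = 0" using fac[of "z\<^sup>2"] unfolding p_def by auto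
    thus "z \<in> {z. cmod z = 1 \<and> Bz z = l}" using SB z1 by auto
  qed
  show ?thesis using su sne ch S by blast
qed

lemma consec_anti:
  assumes c: "consecutive_on_circle S z w" and z1: "cmod z = 1"
    and y: "y \<in> S" "-y \<in> S" "cmod y = 1" "y \<noteq> z" "y \<noteq> -z"
  shows "w \<noteq> -z"
proof
  assume wz: "w = -z"
  from c obtain t where t: "0 < t" "t < 2*pi" "w = z * cis t"
    and no: "\<And>u. 0 < u \<Longrightarrow> u < t \<Longrightarrow> z * cis u \<notin> S"
    unfolding consecutive_on_circle_def by blast
  have z0: "z \<noteq> 0" using z1 by auto
  have ct: "cis t = -1" using t(3) wz z0 by (metis mult_cancel_left mult_minus1_right)
  have "cos t = -1" using arg_cong[OF ct, of Re] by simp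
  then obtain n :: int where n: "t = (2*n+1)*pi" by (auto simp: cos_eq_minus1)
  have "0 * pi < real_of_int (2*n+1) * pi" using t(1) n by simp
  hence "0 < real_of_int (2*n+1)" using mult_less_cancel_right_pos[OF pi_gt_zero] by blast
  moreover have "real_of_int (2*n+1) * pi < 2 * pi" using t(2) n by simp
  hence "real_of_int (2*n+1) < 2" using mult_less_cancel_right_pos[OF pi_gt_zero] by blast
  ultimately have "n = 0" by linarith
  hence tpi: "t = pi" using n by simp
  define v where "v = Arg (y / z)"
  have yz1: "cmod (y / z) = 1" using y(3) z1 by (simp add: norm_divide)
  hence yz0: "y / z \<noteq> 0" by auto
  have cv: "cis v = y / z" unfolding v_def using cis_Arg[OF yz0] yz1 by (simp add: sgn_div_norm)
  have zv: "z * cis v = y" using cv z0 by simp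
  have vb: "-pi < v" "v \<le> pi" using Arg_bounded[of "y/z"] by (auto simp: v_def)
  have v0: "v \<noteq> 0" using cv y(4) z0 by (auto simp: field_simps)
  have vpi: "v \<noteq> pi" using cv y(5) z0 by (auto simp: field_simps)
  show False
  proof (cases "v > 0")
    case True
    thus False using no[of v] zv y(1) vb vpi tpi by auto
  next
    case False
    hence vn: "v < 0" using v0 by auto
    have "z * cis (v + pi) = -y" using zv by (simp add: cis_mult[symmetric] algebra_simps)
    thus False using no[of "v + pi"] y(2) vn vb tpi by auto
  qed
qed

lemma core_all:
  fixes s1 s2 r :: complex and R :: real
  assumes u1: "cmod s1 = 1" and u2: "cmod s2 = 1" and ne1: "s2 \<noteq> s1" and ne2: "s2 \<noteq> -s1"
   and ch: "Re (r^2 * cnj (s1 * s2)) = Re (s1 * cnj s2)" and r1: "cmod r < 1"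
   and R: "R = sqrt ((1 + (cmod r)^2)/2)"
  shows "{z. dist z r + dist z (-r) = 2*R} \<subseteq> convex hull {s1,s2,-s1,-s2}"
    and "\<And>x y. x \<in> {s1,s2,-s1,-s2} \<Longrightarrow> y \<in> {s1,s2,-s1,-s2} \<Longrightarrow> y \<noteq> x \<Longrightarrow> y \<noteq> -x \<Longrightarrow>
          {z. dist z r + dist z (-r) = 2*R} \<inter> closed_segment x y \<noteq> {}"
proof -
  show "{z. dist z r + dist z (-r) = 2*R} \<subseteq> convex hull {s1,s2,-s1,-s2}"
    by (rule core(1)[OF u1 u2 ne1 ne2 ch r1 R])
  have chk: "Re (r^2 * cnj (x * y)) = Re (x * cnj y) \<and> Re (r^2 * cnj (y * x)) = Re (y * cnj x)"
    if "x = s1 \<or> x = -s1" "y = s2 \<or> y = -s2" for x y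
    using that ch by (auto simp: algebra_simps)
  fix x y assume x: "x \<in> {s1,s2,-s1,-s2}" and y: "y \<in> {s1,s2,-s1,-s2}" and yx: "y \<noteq> x" "y \<noteq> -x"
  have xu: "cmod x = 1" "cmod y = 1" using x y u1 u2 by auto
  have "((x = s1 \<or> x = -s1) \<and> (y = s2 \<or> y = -s2)) \<or> ((x = s2 \<or> x = -s2) \<and> (y = s1 \<or> y = -s1))"
    using x y yx by auto
  hence "Re (r^2 * cnj (x * y)) = Re (x * cnj y)" using chk by blast
  from core(2)[OF xu yx this r1 R] show "{z. dist z r + dist z (-r) = 2*R} \<inter> closed_segment x y \<noteq> {}" .
qed

lemma rect:
  assumes "golden_rectangle a b c d" "cmod a = 1" "cmod b = 1" "cmod c = 1" "cmod d = 1"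
  shows "c = -a \<and> d = -b \<and> b \<noteq> a \<and> b \<noteq> -a"
proof -
  have r: "a \<noteq> b" "b \<noteq> c" "b - a = c - d" "Re ((b - a) * cnj (c - b)) = 0"
    using assms(1) unfolding golden_rectangle_def is_rectangle_def by blast+
  have ua: "Re a ^2 + Im a^2 = 1" using assms(2) by (metis cmod_power2 one_power2)
  have ub: "Re b ^2 + Im b^2 = 1" using assms(3) by (metis cmod_power2 one_power2)
  have uc: "Re c ^2 + Im c^2 = 1" using assms(4) by (metis cmod_power2 one_power2)
  have p: "(Re b - Re a) * (Re c - Re b) + (Im b - Im a) * (Im c - Im b) = 0" using r(4) by (simp add: algebra_simps)
  have e1: "(Re a + Re c) * (Re b - Re a) + (Im a + Im c) * (Im b - Im a) = 0"
    using ua ub uc p by algebra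
  have e2: "(Re a + Re c) * (Re c - Re b) + (Im a + Im c) * (Im c - Im b) = 0"
    using ua ub uc p by algebra
  have ne: "(Re b - Re a)^2 + (Im b - Im a)^2 > 0"
  proof -
    have "b - a \<noteq> 0" using r(1) by auto
    hence "(cmod (b - a))^2 > 0" by simp
    thus ?thesis by (simp add: cmod_power2)
  qed
  have nf: "(Re c - Re b)^2 + (Im c - Im b)^2 > 0"
  proof -
    have "c - b \<noteq> 0" using r(2) by auto
    hence "(cmod (c - b))^2 > 0" by simp
    thus ?thesis by (simp add: cmod_power2)
  qed
  have "Re a + Re c = 0 \<and> Im a + Im c = 0"
    by (rule decomp_real[OF p ne nf e1 e2])
  hence ca: "c = -a" by (simp add: complex_eq_iff)
  hence "b + d = 0" using r(3) by (simp add: algebra_simps)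
  hence "d = -b" by (simp add: add_eq_0_iff)
  thus ?thesis using ca r(1,2) by auto
qed

lemma prodA:
  fixes r z :: complex
  shows "(\<Prod>i<4. (z - (if i = (2::nat) then r else if i = 3 then -r else 0)) /
                 (1 - cnj (if i = (2::nat) then r else if i = 3 then -r else 0) * z))
         = z\<^sup>2 * (z\<^sup>2 - r\<^sup>2) / (1 - (cnj r)\<^sup>2 * z\<^sup>2)"
proof -
  have "(\<Prod>i<4. (z - (if i = (2::nat) then r else if i = 3 then -r else 0)) /
                 (1 - cnj (if i = (2::nat) then r else if i = 3 then -r else 0) * z))
       = z * z * ((z - r) / (1 - cnj r * z)) * ((z + r) / (1 + cnj r * z))"
    by (simp add: eval_nat_numeral lessThan_Suc algebra_simps)
  also have "\<dots> = (z * z * ((z - r) * (z + r))) / ((1 - cnj r * z) * (1 + cnj r * z))"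
    by (simp add: times_divide_times_eq mult.assoc)
  also have "\<dots> = z\<^sup>2 * (z\<^sup>2 - r\<^sup>2) / (1 - (cnj r)\<^sup>2 * z\<^sup>2)"
    by (simp add: power2_eq_square algebra_simps)
  finally show ?thesis .
qed

lemma SBeq:
  fixes r z l :: complex
  assumes r1: "cmod r < 1" and z1: "cmod z = 1"
  shows "(z\<^sup>2 * (z\<^sup>2 - r\<^sup>2) / (1 - (cnj r)\<^sup>2 * z\<^sup>2) = l) \<longleftrightarrow>
         (z\<^sup>2)\<^sup>2 - (r\<^sup>2 - l * cnj (r\<^sup>2)) * z\<^sup>2 - l = 0"
proof -
  have "cmod ((cnj r)\<^sup>2 * z\<^sup>2) = (cmod r)\<^sup>2" using z1 by (simp add: norm_mult norm_power)
  also have "\<dots> < 1" using r1 by (simp add: power_less_one_iff abs_less_iff)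
  finally have D: "1 - (cnj r)\<^sup>2 * z\<^sup>2 \<noteq> 0" by auto
  have "(z\<^sup>2 * (z\<^sup>2 - r\<^sup>2) / (1 - (cnj r)\<^sup>2 * z\<^sup>2) = l) \<longleftrightarrow>
        z\<^sup>2 * (z\<^sup>2 - r\<^sup>2) = l * (1 - (cnj r)\<^sup>2 * z\<^sup>2)"
    using D by (simp add: divide_eq_eq)
  also have "\<dots> \<longleftrightarrow> z\<^sup>2 * (z\<^sup>2 - r\<^sup>2) - l * (1 - (cnj r)\<^sup>2 * z\<^sup>2) = 0" by simp
  also have "z\<^sup>2 * (z\<^sup>2 - r\<^sup>2) - l * (1 - (cnj r)\<^sup>2 * z\<^sup>2) = (z\<^sup>2)\<^sup>2 - (r\<^sup>2 - l * cnj (r\<^sup>2)) * z\<^sup>2 - l"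
    by (simp add: power2_eq_square algebra_simps)
  finally show ?thesis .
qed

theorem theorem6:
  fixes a b c d :: complex
  assumes "golden_rectangle a b c d"
    and "cmod a = 1" and "cmod b = 1" and "cmod c = 1" and "cmod d = 1"
  shows "\<exists>E B. is_ellipse E \<and>
           inscribed_in_polygon E {a, b, c, d} {(a, b), (b, c), (c, d), (d, a)} \<and>
           blaschke_product 4 B \<and> B 0 = 0 \<and> poncelet_curve B E"
proof -
  have rc: "c = -a" "d = -b" "b \<noteq> a" "b \<noteq> -a" using rect[OF assms] by auto
  have ua: "cmod a = 1" and ub: "cmod b = 1" using assms by auto
  define q where "q = (a\<^sup>2 + b\<^sup>2) / 2"
  define r where "r = csqrt q"
  define R where "R = sqrt ((1 + (cmod r)^2)/2)"
  define E where "E = {z. dist z r + dist z (-r) = 2*R}"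
  have rq: "r\<^sup>2 = q" by (simp add: r_def)
  have nrq: "(cmod r)\<^sup>2 = cmod q" using rq by (metis norm_power)
  have a2: "cmod (a\<^sup>2) = 1" "cmod (b\<^sup>2) = 1" using ua ub by (simp_all add: norm_power)
  have abne: "a\<^sup>2 \<noteq> b\<^sup>2" using rc(3,4) by (auto simp: power2_eq_iff)
  have q1: "cmod q < 1"
  proof -
    have pl: "(cmod (a\<^sup>2 + b\<^sup>2))\<^sup>2 + (cmod (a\<^sup>2 - b\<^sup>2))\<^sup>2 = 2 * (cmod (a\<^sup>2))\<^sup>2 + 2 * (cmod (b\<^sup>2))\<^sup>2"
      by (simp only: cmod_power2) (simp add: power2_eq_square algebra_simps)
    have "cmod (a\<^sup>2 - b\<^sup>2) > 0" using abne by simp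
    hence Yp: "(cmod (a\<^sup>2 - b\<^sup>2))\<^sup>2 > 0" by simp
    have XY: "(cmod (a\<^sup>2 + b\<^sup>2))\<^sup>2 + (cmod (a\<^sup>2 - b\<^sup>2))\<^sup>2 = 4" using pl a2 by simp
    have "(cmod (a\<^sup>2 + b\<^sup>2))\<^sup>2 < 4" using XY Yp by linarith
    hence "(cmod (a\<^sup>2 + b\<^sup>2))\<^sup>2 < 2\<^sup>2" by simp
    hence "cmod (a\<^sup>2 + b\<^sup>2) < 2" by (rule power2_less_imp_less) simp
    thus ?thesis by (simp add: q_def)
  qed
  have r1: "cmod r < 1"
  proof -
    have "(cmod r)\<^sup>2 < 1" using nrq q1 by simp
    thus ?thesis by (simp add: power_less_one_iff abs_less_iff)
  qed
  have cnj1: "a * cnj a = 1" "b * cnj b = 1"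
    using complex_norm_square[of a] complex_norm_square[of b] ua ub by simp_all
  have chab: "Re (r^2 * cnj (a * b)) = Re (a * cnj b)"
  proof -
    have eq: "r^2 * cnj (a * b) = (a * cnj b + b * cnj a) / 2"
      unfolding rq q_def using cnj1 by (simp add: power2_eq_square field_simps)
    have "Re (r^2 * cnj (a * b)) = Re ((a * cnj b + b * cnj a) / 2)" by (simp only: eq)
    also have "\<dots> = Re (a * cnj b)" by (simp add: algebra_simps)
    finally show ?thesis .
  qed
  have RR: "R = sqrt ((1 + (cmod r)^2)/2)" by (simp add: R_def)
  note CA = core_all[OF ua ub rc(3) rc(4) chab r1 RR, folded E_def]
  have ell: "is_ellipse E"
  proof -
    have "(cmod r)\<^sup>2 < (1 + (cmod r)^2)/2" using r1 by (simp add: power_less_one_iff abs_less_iff)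
    hence "cmod r < R" unfolding R_def by (rule real_less_rsqrt)
    hence "dist r (-r) < 2 * R" by (simp add: dist_norm)
    thus ?thesis unfolding is_ellipse_def E_def by blast
  qed
  have insQ: "inscribed_in_polygon E {a, b, c, d} {(a, b), (b, c), (c, d), (d, a)}"
  proof -
    have h: "{a, b, c, d} = {a, b, -a, -b}" using rc by simp
    have nab: "-b \<noteq> a" "a \<noteq> -b" using rc(4) by auto
    show ?thesis unfolding inscribed_in_polygon_def h
      using CA(1) CA(2)[of a b] CA(2)[of b "-a"] CA(2)[of "-a" "-b"] CA(2)[of "-b" a] rc nab
      by auto
  qed
  define A :: "nat \<Rightarrow> complex" where "A = (\<lambda>i. if i = 2 then r else if i = 3 then -r else 0)"
  define B where "B = (\<lambda>z. 1 * (\<Prod>i<4. (z - A i) / (1 - cnj (A i) * z)))"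
  have bl: "blaschke_product 4 B"
    unfolding blaschke_product_def
    by (rule exI[of _ 1], rule exI[of _ A]) (use r1 in \<open>auto simp: A_def B_def\<close>)
  have Bf: "B z = z\<^sup>2 * (z\<^sup>2 - r\<^sup>2) / (1 - (cnj r)\<^sup>2 * z\<^sup>2)" for z
    unfolding B_def A_def using prodA[of z r] by simp
  have B0: "B 0 = 0" by (simp add: Bf)
  have pc: "poncelet_curve B E"
    unfolding poncelet_curve_def Let_def
  proof (intro allI impI)
    fix l :: complex assume l1: "cmod l = 1"
    have SB: "\<And>z. cmod z = 1 \<Longrightarrow> (B z = l \<longleftrightarrow> (z\<^sup>2)\<^sup>2 - (q - l * cnj q) * z\<^sup>2 - l = 0)"
      using SBeq[OF r1] unfolding Bf rq by blast
    obtain s1 s2 where s: "cmod s1 = 1" "cmod s2 = 1" "s2 \<noteq> s1" "s2 \<noteq> -s1"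
      "Re (q * cnj (s1 * s2)) = Re (s1 * cnj s2)" and S: "{z. cmod z = 1 \<and> B z = l} = {s1, s2, -s1, -s2}"
      using roots_set[OF q1 l1 SB] by blast
    have ch: "Re (r^2 * cnj (s1 * s2)) = Re (s1 * cnj s2)" using s(5) rq by simp
    note CS = core_all[OF s(1-4) ch r1 RR, folded E_def]
    show "inscribed_in_polygon E {z. cmod z = 1 \<and> B z = l}
            {(z, w). consecutive_on_circle {z. cmod z = 1 \<and> B z = l} z w}"
      unfolding inscribed_in_polygon_def S
    proof (intro conjI ballI)
      show "E \<subseteq> convex hull {s1, s2, - s1, - s2}" by (rule CS(1))
    next
      fix pw assume "pw \<in> {(z, w). consecutive_on_circle {s1, s2, - s1, - s2} z w}"
      then obtain z w where pw: "pw = (z, w)" and cz: "consecutive_on_circle {s1, s2, - s1, - s2} z w" by auto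
      have zin: "z \<in> {s1, s2, - s1, - s2}" and win: "w \<in> {s1, s2, - s1, - s2}" and zw: "z \<noteq> w"
        using cz unfolding consecutive_on_circle_def by auto
      have z1: "cmod z = 1" using zin s by auto
      have "w \<noteq> -z"
      proof (cases "z = s1 \<or> z = -s1")
        case True
        show ?thesis by (rule consec_anti[OF cz z1, of s2]) (use True s in auto)
      next
        case False
        hence "z = s2 \<or> z = -s2" using zin by auto
        thus ?thesis by (intro consec_anti[OF cz z1, of s1]) (use s in auto)
      qed
      hence "E \<inter> closed_segment z w \<noteq> {}" using CS(2)[OF zin win] zw by auto
      thus "case pw of (p, q) \<Rightarrow> E \<inter> closed_segment p q \<noteq> {}" using pw by simp
    qed
  qed
  show ?thesis using ell insQ bl B0 pc by blast
qed

end
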